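(* In the bird flocking model, suppose the number of flocks never exceeds $m$. There is a constant $c=c(\varepsilon_o)$ such that, for every bird $i$ and every time $t>1$, $$\Big\|v_i(t)-\frac1t\big(x_i(t)-x_i(0)\big)\Big\|\le c\,n^{2(m+2)}\Big(\frac1\rho\Big)^{m+1}\frac{\log t}{t}.$$
   Context: Bird flocking model: there are $n$ birds with positions $x_i(t)\in\mathbb{R}^3$ and velocities $v_i(t)\in\mathbb{R}^3$. Fix $r\in(0,1]$ and a small $\varepsilon_o>0$. The flocking network $G_t$ is an undirected graph on the birds, defined as follows: - a pair $\{i,j\}$ that is an edge of $G_{t-1}$ is an edge of $G_t$ iff $\|x_i(t)-x_j(t)\|\le r$; - a pair not in $G_{t-1}$ becomes an edge of $G_t$ iff $\|x_i(t)-x_j(t)\|\le r$ and $\|v_i(t)-v_j(t)\|>\varepsilon_o$. The connected components of $G_t$ are the flocks. Let $\mathcal N_i(t)$ be the set of neighbors $j\ne i$ of $i$ in $G_t$. The dynamics is $$x_i(t+1)=x_i(t)+v_i(t+1),\qquad v_i(t+1)=v_i(t)+a_i\sum_{j\in\mathcal N_i(t)}(v_j(t)-v_i(t)),$$ with fixed weights $a_i$ satisfying $0<a_i\le 1/(|\mathcal N_i(t)|+1)$ for all $t$. Set $\rho=\min_ia_i\in(0,1/2]$. The initial conditions satisfy $\|x_i(0)\|\le1$ and $\|v_i(0)\|\le\frac12\sqrt{\rho/n}$ for all $i$. *)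

theory Defs
  imports "HOL-Analysis.Analysis"
begin

text \<open>Positions and velocities: x t i, v t i :: real^3 (bird i at time t; birds are 0..<n).\<close>

text \<open>Flocking network G_t (edge relation), with the convention G_{-1} = empty graph.\<close>
fun flock_edge :: "real \<Rightarrow> real \<Rightarrow> (nat \<Rightarrow> nat \<Rightarrow> real^3) \<Rightarrow> (nat \<Rightarrow> nat \<Rightarrow> real^3)
                    \<Rightarrow> nat \<Rightarrow> nat \<Rightarrow> nat \<Rightarrow> bool" where
  "flock_edge r eps x v 0 i j =
     (i \<noteq> j \<and> norm (x 0 i - x 0 j) \<le> r \<and> norm (v 0 i - v 0 j) > eps)"
| "flock_edge r eps x v (Suc t) i j =
     (i \<noteq> j \<and> norm (x (Suc t) i - x (Suc t) j) \<le> r \<and>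
      (flock_edge r eps x v t i j \<or> norm (v (Suc t) i - v (Suc t) j) > eps))"

definition nbrs :: "nat \<Rightarrow> real \<Rightarrow> real \<Rightarrow> (nat \<Rightarrow> nat \<Rightarrow> real^3) \<Rightarrow> (nat \<Rightarrow> nat \<Rightarrow> real^3)
                    \<Rightarrow> nat \<Rightarrow> nat \<Rightarrow> nat set" where
  "nbrs n r eps x v t i = {j. j < n \<and> flock_edge r eps x v t i j}"

definition flocks :: "nat \<Rightarrow> real \<Rightarrow> real \<Rightarrow> (nat \<Rightarrow> nat \<Rightarrow> real^3) \<Rightarrow> (nat \<Rightarrow> nat \<Rightarrow> real^3)
                    \<Rightarrow> nat \<Rightarrow> nat set set" where
  "flocks n r eps x v t =
     {..<n} // {(i, j). i < n \<and> j < n \<and>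
        (\<lambda>a b. a < n \<and> b < n \<and> flock_edge r eps x v t a b)\<^sup>*\<^sup>* i j}"

definition flocking_system :: "nat \<Rightarrow> real \<Rightarrow> real \<Rightarrow> (nat \<Rightarrow> real)
     \<Rightarrow> (nat \<Rightarrow> nat \<Rightarrow> real^3) \<Rightarrow> (nat \<Rightarrow> nat \<Rightarrow> real^3) \<Rightarrow> bool" where
  "flocking_system n r eps a x v \<longleftrightarrow>
     0 < r \<and> r \<le> 1 \<and> 0 < eps \<and>
     (\<forall>i<n. 0 < a i \<and> (\<forall>t. a i \<le> 1 / (real (card (nbrs n r eps x v t i)) + 1))) \<and>
     Min (a ` {..<n}) \<le> 1/2 \<and>
     (\<forall>t. \<forall>i<n. v (Suc t) i =
         v t i + a i *\<^sub>R (\<Sum>j\<in>nbrs n r eps x v t i. v t j - v t i)) \<and>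
     (\<forall>t. \<forall>i<n. x (Suc t) i = x t i + v (Suc t) i) \<and>
     (\<forall>i<n. norm (x 0 i) \<le> 1 \<and>
            norm (v 0 i) \<le> 1/2 * sqrt (Min (a ` {..<n}) / real n))"

end

theory Submission imports Defs begin

definition cls :: "(nat \<Rightarrow> nat \<Rightarrow> bool) \<Rightarrow> nat \<Rightarrow> nat \<Rightarrow> nat set" where
  "cls q n i = {j. j < n \<and> q i j}"
definition cPi :: "(nat \<Rightarrow> nat \<Rightarrow> bool) \<Rightarrow> (nat \<Rightarrow> real) \<Rightarrow> nat \<Rightarrow> nat \<Rightarrow> real" where
  "cPi q w n i = (\<Sum>j\<in>cls q n i. w j)"
definition cmu :: "(nat \<Rightarrow> nat \<Rightarrow> bool) \<Rightarrow> (nat \<Rightarrow> real) \<Rightarrow> nat \<Rightarrow> (nat \<Rightarrow> 'a::real_inner) \<Rightarrow> nat \<Rightarrow> 'a" where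
  "cmu q w n y i = (1 / cPi q w n i) *\<^sub>R (\<Sum>j\<in>cls q n i. w j *\<^sub>R y j)"
definition En :: "(nat \<Rightarrow> real) \<Rightarrow> nat \<Rightarrow> (nat \<Rightarrow> 'a::real_inner) \<Rightarrow> real" where
  "En w n y = (\<Sum>i<n. w i * norm (y i)^2)"
definition cR :: "(nat \<Rightarrow> nat \<Rightarrow> bool) \<Rightarrow> (nat \<Rightarrow> real) \<Rightarrow> nat \<Rightarrow> (nat \<Rightarrow> 'a::real_inner) \<Rightarrow> real" where
  "cR q w n y = (\<Sum>i<n. w i * norm (y i - cmu q w n y i)^2)"
definition cM :: "(nat \<Rightarrow> nat \<Rightarrow> bool) \<Rightarrow> (nat \<Rightarrow> real) \<Rightarrow> nat \<Rightarrow> (nat \<Rightarrow> 'a::real_inner) \<Rightarrow> real" where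
  "cM q w n y = (\<Sum>i<n. w i * norm (cmu q w n y i)^2)"

definition equivn :: "(nat \<Rightarrow> nat \<Rightarrow> bool) \<Rightarrow> nat \<Rightarrow> bool" where
  "equivn q n \<longleftrightarrow> (\<forall>i<n. q i i) \<and> (\<forall>i j. q i j \<longrightarrow> q j i) \<and> (\<forall>i j k. q i j \<longrightarrow> q j k \<longrightarrow> q i k)"

lemma equivnD:
  assumes "equivn q n"
  shows "\<And>i. i < n \<Longrightarrow> q i i" "\<And>i j. q i j \<Longrightarrow> q j i" "\<And>i j k. q i j \<Longrightarrow> q j k \<Longrightarrow> q i k"
  using assms unfolding equivn_def by blast+

lemma cls_eq: assumes e: "equivn q n" and qij: "q i j" shows "cls q n i = cls q n j"
proof -
  note d = equivnD[OF e]
  show ?thesis unfolding cls_def using d(2,3) qij by blast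
qed

lemma cPi_pos: assumes e: "equivn q n" and i: "i < n" and w: "\<forall>j<n. w j > 0"
  shows "cPi q w n i > 0"
proof -
  have "i \<in> cls q n i" using equivnD(1)[OF e i] i by (simp add: cls_def)
  moreover have "finite (cls q n i)" by (simp add: cls_def)
  moreover have "\<forall>j\<in>cls q n i. 0 \<le> w j" using w by (simp add: cls_def order.strict_implies_order)
  ultimately have "(\<Sum>j\<in>cls q n i. w j) \<ge> w i"
    by (intro member_le_sum) auto
  moreover have "w i > 0" using w i by simp
  ultimately show ?thesis unfolding cPi_def by linarith
qed

lemma cmu_eq: "equivn q n \<Longrightarrow> q i j \<Longrightarrow> cmu q w n y i = cmu q w n y j"
  unfolding cmu_def cPi_def using cls_eq[of q n i j] by simp

lemma sum_cls: "(\<Sum>i<n. if q j i then g i else 0) = sum g (cls q n j)"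
  by (simp add: cls_def sum.inter_filter[symmetric])

lemma keyK:
  fixes y f :: "nat \<Rightarrow> 'a::real_inner"
  assumes e: "equivn q n" and w: "\<forall>j<n. w j > 0"
    and f: "\<And>i j. q i j \<Longrightarrow> f i = f j"
  shows "(\<Sum>i<n. w i * (cmu q w n y i \<bullet> f i)) = (\<Sum>i<n. w i * (y i \<bullet> f i))"
proof -
  have sy: "q i j \<longleftrightarrow> q j i" for i j using e unfolding equivn_def by blast
  define h where "h i j = w i * w j * (y j \<bullet> f j) / cPi q w n j" for i j
  have "(\<Sum>i<n. w i * (cmu q w n y i \<bullet> f i))
      = (\<Sum>i<n. \<Sum>j<n. (if q i j then h i j else 0))"
  proof (rule sum.cong[OF refl])
    fix i assume i: "i \<in> {..<n}"
    have "w i * (cmu q w n y i \<bullet> f i) = w i / cPi q w n i * (\<Sum>j\<in>cls q n i. w j * (y j \<bullet> f i))"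
      by (simp add: cmu_def inner_sum_left)
    also have "\<dots> = (\<Sum>j\<in>cls q n i. h i j)"
    proof (subst sum_distrib_left, rule sum.cong[OF refl])
      fix j assume "j \<in> cls q n i"
      hence qij: "q i j" by (simp add: cls_def)
      have "f j = f i" using f[OF qij] by simp
      moreover have "cPi q w n j = cPi q w n i" unfolding cPi_def using cls_eq[OF e qij] by simp
      ultimately show "w i / cPi q w n i * (w j * (y j \<bullet> f i)) = h i j"
        unfolding h_def by simp
    qed
    also have "\<dots> = (\<Sum>j<n. (if q i j then h i j else 0))"
      by (rule sum_cls[symmetric])
    finally show "w i * (cmu q w n y i \<bullet> f i) = (\<Sum>j<n. (if q i j then h i j else 0))" .
  qed
  also have "\<dots> = (\<Sum>j<n. \<Sum>i<n. (if q i j then h i j else 0))"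
    by (rule sum.swap)
  also have "\<dots> = (\<Sum>j<n. w j * (y j \<bullet> f j))"
  proof (rule sum.cong[OF refl])
    fix j assume j: "j \<in> {..<n}"
    have "(\<Sum>i<n. (if q i j then h i j else 0)) = (\<Sum>i<n. (if q j i then h i j else 0))"
      using sy by simp
    also have "\<dots> = (\<Sum>i\<in>cls q n j. h i j)" by (rule sum_cls)
    also have "\<dots> = (\<Sum>i\<in>cls q n j. w i) * (w j * (y j \<bullet> f j) / cPi q w n j)"
      unfolding h_def sum_distrib_right by (simp add: mult.assoc)
    also have "\<dots> = w j * (y j \<bullet> f j)"
      using cPi_pos[OF e _ w, of j] j by (simp add: cPi_def)
    finally show "(\<Sum>i<n. (if q i j then h i j else 0)) = w j * (y j \<bullet> f j)" .
  qed
  finally show ?thesis .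
qed

lemma cR_eq:
  assumes e: "equivn q n" and w: "\<forall>j<n. w j > 0"
  shows "cR q w n y = En w n y - cM q w n y"
proof -
  have k: "(\<Sum>i<n. w i * (cmu q w n y i \<bullet> cmu q w n y i)) = (\<Sum>i<n. w i * (y i \<bullet> cmu q w n y i))"
    by (rule keyK[OF e w]) (rule cmu_eq[OF e])
  have "cR q w n y = (\<Sum>i<n. w i * norm (y i)^2 - 2 * (w i * (y i \<bullet> cmu q w n y i)) + w i * (cmu q w n y i \<bullet> cmu q w n y i))"
    unfolding cR_def
    by (rule sum.cong[OF refl]) (simp add: power2_norm_eq_inner inner_diff algebra_simps inner_commute)
  also have "\<dots> = En w n y - cM q w n y"
    unfolding En_def cM_def sum.distrib sum_subtractf sum_distrib_left[symmetric] k[symmetric]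
    by (simp add: power2_norm_eq_inner)
  finally show ?thesis .
qed

lemma cM_le_En:
  assumes e: "equivn q n" and w: "\<forall>j<n. w j > 0"
  shows "cM q w n y \<le> En w n y"
proof -
  have "cR q w n y \<ge> 0" unfolding cR_def using w by (intro sum_nonneg) auto
  thus ?thesis using cR_eq[OF e w, of y] by linarith
qed

lemma cM_refine:
  assumes ef: "equivn qf n" and ec: "equivn qc n" and w: "\<forall>j<n. w j > 0"
    and sub: "\<And>i j. qf i j \<Longrightarrow> qc i j"
  shows "cM qc w n y \<le> cM qf w n y"
proof -
  let ?f = "cmu qf w n y" and ?c = "cmu qc w n y"
  have k1: "(\<Sum>i<n. w i * (?f i \<bullet> ?c i)) = (\<Sum>i<n. w i * (y i \<bullet> ?c i))"
    by (rule keyK[OF ef w]) (rule cmu_eq[OF ec sub])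
  have k2: "(\<Sum>i<n. w i * (?c i \<bullet> ?c i)) = (\<Sum>i<n. w i * (y i \<bullet> ?c i))"
    by (rule keyK[OF ec w]) (rule cmu_eq[OF ec])
  have "0 \<le> (\<Sum>i<n. w i * norm (?f i - ?c i)^2)" using w by (intro sum_nonneg) auto
  also have "\<dots> = (\<Sum>i<n. w i * (?f i \<bullet> ?f i) - 2 * (w i * (?f i \<bullet> ?c i)) + w i * (?c i \<bullet> ?c i))"
    by (rule sum.cong[OF refl]) (simp add: power2_norm_eq_inner inner_diff algebra_simps inner_commute)
  also have "\<dots> = cM qf w n y - cM qc w n y"
    unfolding cM_def sum.distrib sum_subtractf sum_distrib_left[symmetric] k1 k2[symmetric]
    by (simp add: power2_norm_eq_inner)
  finally show ?thesis by linarith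
qed


lemma norm_sum_sq_le: "norm (sum f A)^2 \<le> real (card A) * (\<Sum>j\<in>A. norm (f j)^2)"
proof -
  have "norm (sum f A) \<le> (\<Sum>j\<in>A. norm (f j))" by (rule norm_sum)
  hence "norm (sum f A)^2 \<le> (\<Sum>j\<in>A. norm (f j))^2"
    by (intro power_mono) auto
  also have "\<dots> \<le> (\<Sum>j\<in>A. norm (f j)^2) * card A" by (rule sum_squared_le_sum_of_squares)
  finally show ?thesis by (simp add: mult.commute)
qed

lemma flock_edge_sym: "flock_edge r eps x v t i j = flock_edge r eps x v t j i"
  by (induction t) (auto simp: norm_minus_commute)

lemma flock_edge_irrefl: "\<not> flock_edge r eps x v t i i"
  by (cases t) auto

locale flk =
  fixes n :: nat and r eps :: real and a :: "nat \<Rightarrow> real" and x v :: "nat \<Rightarrow> nat \<Rightarrow> real^3"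
  assumes sys: "flocking_system n r eps a x v" and n1: "1 \<le> n"
begin

definition "w i = 1 / a i"
definition "rho = Min (a ` {..<n})"
definition "ed t = (\<lambda>i j. i < n \<and> j < n \<and> flock_edge r eps x v t i j)"
definition "conn t = (\<lambda>i j. i < n \<and> j < n \<and> (ed t)\<^sup>*\<^sup>* i j)"
definition "Nb t i = nbrs n r eps x v t i"
definition "g t i = (\<Sum>j\<in>Nb t i. v t j - v t i)"
definition "D t = (\<Sum>i<n. \<Sum>j\<in>Nb t i. norm (v t j - v t i)^2)"
definition "E t = En w n (v t)"
definition "R t = cR (conn t) w n (v t)"
definition "M t = cM (conn t) w n (v t)"
definition "V0 = 1/2 * sqrt (rho / real n)"

lemma a_pos: "i < n \<Longrightarrow> 0 < a i" using sys unfolding flocking_system_def by blast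
lemma a_le: "i < n \<Longrightarrow> a i \<le> 1 / (real (card (Nb t i)) + 1)"
  using sys unfolding flocking_system_def Nb_def by blast
lemma vstep: "i < n \<Longrightarrow> v (Suc t) i = v t i + a i *\<^sub>R g t i"
  using sys unfolding flocking_system_def g_def Nb_def by blast
lemma xstep: "i < n \<Longrightarrow> x (Suc t) i = x t i + v (Suc t) i"
  using sys unfolding flocking_system_def by blast
lemma x0: "i < n \<Longrightarrow> norm (x 0 i) \<le> 1" using sys unfolding flocking_system_def by blast
lemma v0: "i < n \<Longrightarrow> norm (v 0 i) \<le> V0" using sys unfolding flocking_system_def V0_def rho_def by blast
lemma r_le: "r \<le> 1" and eps_pos: "0 < eps" using sys unfolding flocking_system_def by auto
lemma rho_le_half: "rho \<le> 1/2" using sys unfolding flocking_system_def rho_def by blast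

lemma rho_le: "i < n \<Longrightarrow> rho \<le> a i" unfolding rho_def by (intro Min_le) auto
lemma rho_pos: "0 < rho"
proof -
  have "rho \<in> a ` {..<n}" unfolding rho_def using n1 by (intro Min_in) (auto simp: lessThan_empty_iff)
  thus ?thesis using a_pos by auto
qed
lemma w_pos: "\<forall>j<n. w j > 0" using a_pos by (simp add: w_def)
lemma w_le: "i < n \<Longrightarrow> w i \<le> 1 / rho"
  unfolding w_def using rho_le rho_pos a_pos by (simp add: frac_le)
lemma wa: "i < n \<Longrightarrow> w i * a i = 1"
proof -
  assume i: "i < n"
  have "a i \<noteq> 0" using a_pos[OF i] by simp
  thus ?thesis by (simp add: w_def)
qed

lemma Nb_sub: "Nb t i \<subseteq> {..<n} - {i}"
  unfolding Nb_def nbrs_def using flock_edge_irrefl by auto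
lemma Nb_fin: "finite (Nb t i)" using Nb_sub finite_subset by blast
lemma Nb_card: "i < n \<Longrightarrow> card (Nb t i) + 1 \<le> n"
proof -
  assume i: "i < n"
  have "card (Nb t i) \<le> card ({..<n} - {i})" by (rule card_mono) (use Nb_sub in auto)
  also have "\<dots> = n - 1" using i by simp
  finally show ?thesis using i by linarith
qed
lemma Nb_iff: "i < n \<Longrightarrow> j \<in> Nb t i \<longleftrightarrow> ed t i j"
  unfolding Nb_def nbrs_def ed_def by auto
lemma ed_sym: "ed t i j = ed t j i" unfolding ed_def using flock_edge_sym by blast

lemma a_le1: "i < n \<Longrightarrow> a i \<le> 1"
proof -
  assume i: "i < n"
  have "a i \<le> 1 / (real (card (Nb 0 i)) + 1)" using a_le[OF i] .
  also have "\<dots> \<le> 1" by simp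
  finally show ?thesis .
qed

lemma ad_le: "i < n \<Longrightarrow> a i * real (card (Nb t i)) \<le> 1 - 1 / real n"
proof -
  assume i: "i < n"
  let ?d = "real (card (Nb t i))"
  have h: "a i \<le> 1 / (?d + 1)" by (rule a_le[OF i])
  have "a i * ?d \<le> ?d / (?d + 1)"
    using mult_right_mono[OF h, of ?d] by simp
  also have "\<dots> = 1 - 1 / (?d + 1)" by (simp add: field_simps)
  also have "\<dots> \<le> 1 - 1 / real n"
  proof -
    have "?d + 1 \<le> real n" using Nb_card[OF i, of t] by linarith
    hence "1 / real n \<le> 1 / (?d + 1)" by (intro divide_left_mono) auto
    thus ?thesis by simp
  qed
  finally show ?thesis .
qed

lemma swapNb: "(\<Sum>i<n. \<Sum>j\<in>Nb t i. F i j) = (\<Sum>i<n. \<Sum>j\<in>Nb t i. F j i)"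
proof -
  have e: "(\<Sum>j\<in>Nb t i. H j) = (\<Sum>j<n. if ed t i j then H j else 0)" if "i < n" for i and H :: "nat \<Rightarrow> 'b::comm_monoid_add"
  proof -
    have "Nb t i = {j\<in>{..<n}. ed t i j}" using Nb_iff[OF that] Nb_sub by (auto simp: ed_def)
    thus ?thesis using sum.inter_filter[of "{..<n}" H "ed t i"] by simp
  qed
  have "(\<Sum>i<n. \<Sum>j\<in>Nb t i. F i j) = (\<Sum>i<n. \<Sum>j<n. if ed t i j then F i j else 0)"
    by (rule sum.cong[OF refl]) (simp add: e)
  also have "\<dots> = (\<Sum>j<n. \<Sum>i<n. if ed t i j then F i j else 0)" by (rule sum.swap)
  also have "\<dots> = (\<Sum>j<n. \<Sum>i<n. if ed t j i then F i j else 0)" by (simp add: ed_sym)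
  also have "\<dots> = (\<Sum>i<n. \<Sum>j\<in>Nb t i. F j i)"
    by (rule sum.cong[OF refl]) (simp add: e)
  finally show ?thesis .
qed

definition "G t = (\<Sum>i<n. a i * norm (g t i)^2)"

lemma G_le: "G t \<le> (1 - 1 / real n) * D t"
proof -
  have "G t \<le> (\<Sum>i<n. (1 - 1 / real n) * (\<Sum>j\<in>Nb t i. norm (v t j - v t i)^2))"
    unfolding G_def
  proof (rule sum_mono)
    fix i assume "i \<in> {..<n}" hence i: "i < n" by simp
    have "a i * norm (g t i)^2 \<le> a i * (real (card (Nb t i)) * (\<Sum>j\<in>Nb t i. norm (v t j - v t i)^2))"
      unfolding g_def using a_pos[OF i] by (intro mult_left_mono norm_sum_sq_le) auto
    also have "\<dots> = (a i * real (card (Nb t i))) * (\<Sum>j\<in>Nb t i. norm (v t j - v t i)^2)" by simp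
    also have "\<dots> \<le> (1 - 1 / real n) * (\<Sum>j\<in>Nb t i. norm (v t j - v t i)^2)"
      by (intro mult_right_mono ad_le[OF i]) (auto intro: sum_nonneg)
    finally show "a i * norm (g t i)^2 \<le> (1 - 1 / real n) * (\<Sum>j\<in>Nb t i. norm (v t j - v t i)^2)" .
  qed
  also have "\<dots> = (1 - 1 / real n) * D t" unfolding D_def by (simp add: sum_distrib_left)
  finally show ?thesis .
qed

lemma D_nonneg: "0 \<le> D t" unfolding D_def by (intro sum_nonneg) auto
lemma G_nonneg: "0 \<le> G t" unfolding G_def using a_pos by (intro sum_nonneg mult_nonneg_nonneg) (auto intro: less_imp_le)

lemma vg_sum: "(\<Sum>i<n. v t i \<bullet> g t i) = - D t / 2"
proof -
  let ?F = "\<lambda>i j. v t i \<bullet> (v t j - v t i)"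
  have s: "(\<Sum>i<n. v t i \<bullet> g t i) = (\<Sum>i<n. \<Sum>j\<in>Nb t i. ?F i j)"
    unfolding g_def by (simp add: inner_sum_right)
  have "2 * (\<Sum>i<n. \<Sum>j\<in>Nb t i. ?F i j) = (\<Sum>i<n. \<Sum>j\<in>Nb t i. ?F i j) + (\<Sum>i<n. \<Sum>j\<in>Nb t i. ?F j i)"
    using swapNb[of ?F t] by simp
  also have "\<dots> = (\<Sum>i<n. \<Sum>j\<in>Nb t i. ?F i j + ?F j i)" by (simp add: sum.distrib)
  also have "\<dots> = - D t"
    unfolding D_def sum_negf[symmetric]
    by (intro sum.cong refl) (simp add: power2_norm_eq_inner inner_diff algebra_simps inner_commute)
  finally show ?thesis using s by simp
qed

lemma energy_step: "E (Suc t) = E t - D t + G t"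
proof -
  have "E (Suc t) = (\<Sum>i<n. w i * norm (v t i)^2 + 2 * (v t i \<bullet> g t i) + a i * norm (g t i)^2)"
    unfolding E_def En_def
  proof (rule sum.cong[OF refl])
    fix i assume "i \<in> {..<n}" hence i: "i < n" by simp
    have "w i * norm (v (Suc t) i)^2 = w i * (norm (v t i)^2 + 2 * a i * (v t i \<bullet> g t i) + a i * a i * norm (g t i)^2)"
      unfolding vstep[OF i] by (simp add: power2_norm_eq_inner inner_add algebra_simps inner_commute)
    also have "\<dots> = w i * norm (v t i)^2 + 2 * ((w i * a i) * (v t i \<bullet> g t i)) + (w i * a i) * a i * norm (g t i)^2"
      by (simp add: algebra_simps)
    also have "\<dots> = w i * norm (v t i)^2 + 2 * (v t i \<bullet> g t i) + a i * norm (g t i)^2"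
      by (simp add: wa[OF i])
    finally show "w i * norm (v (Suc t) i)^2 = w i * norm (v t i)^2 + 2 * (v t i \<bullet> g t i) + a i * norm (g t i)^2" .
  qed
  also have "\<dots> = E t + 2 * (\<Sum>i<n. v t i \<bullet> g t i) + G t"
    unfolding E_def En_def G_def sum.distrib sum_distrib_left ..
  finally show ?thesis using vg_sum[of t] by simp
qed

lemma energy_dec: "D t / real n \<le> E t - E (Suc t)"
proof -
  have "G t \<le> (1 - 1 / real n) * D t" by (rule G_le)
  hence "E t - E (Suc t) \<ge> D t - (1 - 1 / real n) * D t" using energy_step[of t] by simp
  thus ?thesis by (simp add: algebra_simps)
qed

lemma E_mono: "E (Suc t) \<le> E t"
proof -
  have "0 \<le> D t / real n" using D_nonneg[of t] by simp
  thus ?thesis using energy_dec[of t] by linarith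
qed

lemma dv_le: "i < n \<Longrightarrow> norm (v (Suc t) i - v t i)^2 \<le> D t"
proof -
  assume i: "i < n"
  have "norm (v (Suc t) i - v t i)^2 = a i * (a i * norm (g t i)^2)"
    unfolding vstep[OF i] using a_pos[OF i] by (simp add: power2_eq_square)
  also have "\<dots> \<le> 1 * (a i * norm (g t i)^2)"
    using a_le1[OF i] a_pos[OF i] by (intro mult_right_mono) auto
  also have "\<dots> \<le> G t" unfolding G_def using i a_pos
    by (simp, intro member_le_sum mult_nonneg_nonneg) (auto intro: less_imp_le)
  also have "\<dots> \<le> D t"
  proof -
    have "(1 - 1 / real n) * D t = D t - D t / real n" by (simp add: algebra_simps)
    moreover have "0 \<le> D t / real n" using D_nonneg[of t] by simp
    ultimately show ?thesis using G_le[of t] by linarith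
  qed
  finally show ?thesis .
qed


lemma ed_lt: "ed t i j \<Longrightarrow> i < n \<and> j < n" unfolding ed_def by simp

lemma ed_rtr_sym: "(ed t)\<^sup>*\<^sup>* i j \<Longrightarrow> (ed t)\<^sup>*\<^sup>* j i"
proof (induction rule: rtranclp_induct)
  case base thus ?case by simp
next
  case (step y z)
  have "ed t z y" using step(2) ed_sym by simp
  thus ?case using step(3) by (rule converse_rtranclp_into_rtranclp)
qed

lemma conn_equivn: "equivn (conn t) n"
  unfolding equivn_def conn_def using ed_rtr_sym rtranclp_trans by (auto intro: rtranclp_trans)

lemma ed_conn: "ed t i j \<Longrightarrow> conn t i j" unfolding conn_def using ed_lt by auto

lemma cls_closed: "j \<in> cls (conn t) n i \<Longrightarrow> ed t j k \<Longrightarrow> k \<in> cls (conn t) n i"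
proof -
  assume j: "j \<in> cls (conn t) n i" and e: "ed t j k"
  have "conn t i j" using j by (simp add: cls_def)
  moreover have "conn t j k" using ed_conn[OF e] .
  ultimately have "conn t i k" using equivnD(3)[OF conn_equivn] by blast
  thus ?thesis using ed_lt[OF e] by (simp add: cls_def)
qed

lemma swapC:
  assumes C: "C \<subseteq> {..<n}" and cl: "\<And>j k. j \<in> C \<Longrightarrow> ed t j k \<Longrightarrow> k \<in> C"
  shows "(\<Sum>j\<in>C. \<Sum>k\<in>Nb t j. F j k) = (\<Sum>j\<in>C. \<Sum>k\<in>Nb t j. F k j)"
proof -
  have fC: "finite C" using C finite_subset by blast
  have e: "(\<Sum>k\<in>Nb t j. H k) = (\<Sum>k\<in>C. if ed t j k then H k else 0)" if "j \<in> C" for j and H :: "nat \<Rightarrow> 'b::comm_monoid_add"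
  proof -
    have jn: "j < n" using that C by auto
    have "Nb t j = {k\<in>C. ed t j k}" using Nb_iff[OF jn] cl[OF that] by auto
    thus ?thesis using sum.inter_filter[OF fC, of H "ed t j"] by simp
  qed
  have "(\<Sum>j\<in>C. \<Sum>k\<in>Nb t j. F j k) = (\<Sum>j\<in>C. \<Sum>k\<in>C. if ed t j k then F j k else 0)"
    by (rule sum.cong[OF refl]) (simp add: e)
  also have "\<dots> = (\<Sum>k\<in>C. \<Sum>j\<in>C. if ed t j k then F j k else 0)" by (rule sum.swap)
  also have "\<dots> = (\<Sum>k\<in>C. \<Sum>j\<in>C. if ed t k j then F j k else 0)" by (simp add: ed_sym)
  also have "\<dots> = (\<Sum>j\<in>C. \<Sum>k\<in>Nb t j. F k j)"
    by (rule sum.cong[OF refl]) (simp add: e)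
  finally show ?thesis .
qed

lemma sum_g_zero:
  assumes C: "C \<subseteq> {..<n}" and cl: "\<And>j k. j \<in> C \<Longrightarrow> ed t j k \<Longrightarrow> k \<in> C"
  shows "(\<Sum>j\<in>C. g t j) = 0"
proof -
  let ?F = "\<lambda>j k. v t k - v t j"
  have "(\<Sum>j\<in>C. g t j) = (\<Sum>j\<in>C. \<Sum>k\<in>Nb t j. ?F j k)" unfolding g_def ..
  also have "\<dots> = (\<Sum>j\<in>C. \<Sum>k\<in>Nb t j. ?F k j)" by (rule swapC[OF C cl])
  also have "\<dots> = - (\<Sum>j\<in>C. \<Sum>k\<in>Nb t j. ?F j k)"
    by (simp add: sum_negf[symmetric])
  finally have "2 *\<^sub>R (\<Sum>j\<in>C. g t j) = 0" unfolding g_def by (simp add: scaleR_2)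
  thus ?thesis by simp
qed

lemma cmu_pres: "cmu (conn t) w n (v (Suc t)) i = cmu (conn t) w n (v t) i"
proof -
  let ?C = "cls (conn t) n i"
  have C: "?C \<subseteq> {..<n}" by (auto simp: cls_def)
  have "(\<Sum>j\<in>?C. w j *\<^sub>R v (Suc t) j) = (\<Sum>j\<in>?C. w j *\<^sub>R v t j + g t j)"
  proof (rule sum.cong[OF refl])
    fix j assume "j \<in> ?C" hence j: "j < n" by (simp add: cls_def)
    show "w j *\<^sub>R v (Suc t) j = w j *\<^sub>R v t j + g t j"
      unfolding vstep[OF j] by (simp add: scaleR_add_right wa[OF j])
  qed
  also have "\<dots> = (\<Sum>j\<in>?C. w j *\<^sub>R v t j)"
    using sum_g_zero[OF C cls_closed] by (simp add: sum.distrib)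
  finally show ?thesis unfolding cmu_def by simp
qed

lemma M_pres: "cM (conn t) w n (v (Suc t)) = M t"
  unfolding M_def cM_def using cmu_pres by simp

lemma R_eq: "R t = E t - M t"
  unfolding R_def E_def M_def by (rule cR_eq[OF conn_equivn w_pos])

lemma M_nonneg: "0 \<le> M t" unfolding M_def cM_def using w_pos by (intro sum_nonneg) (auto intro: less_imp_le)
lemma R_nonneg: "0 \<le> R t" unfolding R_def cR_def using w_pos by (intro sum_nonneg) (auto intro: less_imp_le)

lemma dE_le_R: "E t - E (Suc t) \<le> R t"
proof -
  have "cM (conn t) w n (v (Suc t)) \<le> En w n (v (Suc t))" by (rule cM_le_En[OF conn_equivn w_pos])
  thus ?thesis using R_eq[of t] M_pres[of t] unfolding E_def by linarith
qed

definition "nocr t \<longleftrightarrow> (\<forall>i j. ed (Suc t) i j \<longrightarrow> ed t i j)"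

lemma R_step: assumes "nocr t" shows "R (Suc t) \<le> R t - (E t - E (Suc t))"
proof -
  have sub: "conn (Suc t) i j \<Longrightarrow> conn t i j" for i j
  proof -
    assume c: "conn (Suc t) i j"
    have "(ed t)\<^sup>*\<^sup>* i j"
      using c unfolding conn_def by (auto intro: rtranclp_mono[THEN predicate2D, rotated] simp: assms[unfolded nocr_def])
    thus ?thesis using c unfolding conn_def by simp
  qed
  have "cM (conn t) w n (v (Suc t)) \<le> cM (conn (Suc t)) w n (v (Suc t))"
    by (rule cM_refine[OF conn_equivn conn_equivn w_pos sub])
  thus ?thesis using R_eq[of t] R_eq[of "Suc t"] M_pres[of t] unfolding M_def by linarith
qed

lemma E_nonneg: "0 \<le> E t" unfolding E_def En_def using w_pos by (intro sum_nonneg) (auto intro: less_imp_le)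

lemma E_le0: "E t \<le> E 0"
proof (induction t)
  case (Suc t) thus ?case using E_mono[of t] by linarith
qed simp

lemma V0_le: "V0 \<le> 1/2"
proof -
  have "rho / real n \<le> 1" using rho_le_half n1 rho_pos by (simp add: divide_le_eq)
  hence "sqrt (rho / real n) \<le> 1" by simp
  thus ?thesis unfolding V0_def by simp
qed

lemma E0_le: "E 0 \<le> 1/4"
proof -
  have "E 0 \<le> (\<Sum>i<n. 1 / (4 * real n))" unfolding E_def En_def
  proof (rule sum_mono)
    fix i assume "i \<in> {..<n}" hence i: "i < n" by simp
    have "norm (v 0 i)^2 \<le> V0^2" using v0[OF i] by (intro power_mono) auto
    also have "\<dots> = rho / (4 * real n)" unfolding V0_def using rho_pos n1
      by (simp add: power_mult_distrib power_divide)
    finally have h1: "norm (v 0 i)^2 \<le> rho / (4 * real n)" .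
    have "w i * norm (v 0 i)^2 \<le> (1 / rho) * (rho / (4 * real n))"
      using w_le[OF i] w_pos i h1 rho_pos by (intro mult_mono) auto
    also have "\<dots> = 1 / (4 * real n)" using rho_pos by simp
    finally show "w i * norm (v 0 i)^2 \<le> 1 / (4 * real n)" .
  qed
  also have "\<dots> = 1/4" using n1 by simp
  finally show ?thesis .
qed

lemma R_le: "R t \<le> 1/4" using R_eq[of t] M_nonneg[of t] E_le0[of t] E0_le by linarith


lemma edge_diff: "ed t p q \<Longrightarrow> norm (v t q - v t p) \<le> sqrt (D t)"
proof -
  assume e: "ed t p q"
  have p: "p < n" using ed_lt[OF e] by simp
  have q: "q \<in> Nb t p" using Nb_iff[OF p] e by simp
  have "norm (v t q - v t p)^2 \<le> (\<Sum>k\<in>Nb t p. norm (v t k - v t p)^2)"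
    using q Nb_fin by (intro member_le_sum) auto
  also have "\<dots> \<le> D t" unfolding D_def using p
    by (intro member_le_sum sum_nonneg) auto
  finally show ?thesis by (rule real_le_rsqrt)
qed

lemma path_diff: "(p, q) \<in> {(i, j). ed t i j} ^^ k \<Longrightarrow> norm (v t q - v t p) \<le> real k * sqrt (D t)"
proof (induction k arbitrary: q)
  case 0 thus ?case by simp
next
  case (Suc k)
  from Suc.prems obtain y where py: "(p, y) \<in> {(i, j). ed t i j} ^^ k" and yq: "(y, q) \<in> {(i, j). ed t i j}"
    by (rule relpow_Suc_E)
  have "norm (v t q - v t p) \<le> norm (v t q - v t y) + norm (v t y - v t p)"
    using norm_triangle_ineq[of "v t q - v t y" "v t y - v t p"] by simp
  also have "\<dots> \<le> sqrt (D t) + real k * sqrt (D t)"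
    using edge_diff[of t y q] yq Suc.IH[OF py] by (intro add_mono) auto
  finally show ?case by (simp add: algebra_simps)
qed

lemma conn_diff: "conn t i j \<Longrightarrow> norm (v t j - v t i) \<le> real n ^ 2 * sqrt (D t)"
proof -
  assume c: "conn t i j"
  let ?Rl = "{(i, j). ed t i j}"
  have sub: "?Rl \<subseteq> {..<n} \<times> {..<n}" using ed_lt by auto
  hence fin: "finite ?Rl" by (rule finite_subset) simp
  have cd: "card ?Rl \<le> n * n" using card_mono[OF _ sub] by simp
  have "(i, j) \<in> ?Rl\<^sup>*" using c unfolding conn_def rtranclp_rtrancl_eq by simp
  then obtain k where k: "k \<le> card ?Rl" and ij: "(i, j) \<in> ?Rl ^^ k"
    unfolding rtrancl_finite_eq_relpow[OF fin] by blast
  have "norm (v t j - v t i) \<le> real k * sqrt (D t)" by (rule path_diff[OF ij])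
  also have "\<dots> \<le> real n ^ 2 * sqrt (D t)"
  proof (rule mult_right_mono)
    have "k \<le> n * n" using k cd by linarith
    hence "real k \<le> real (n * n)" by linarith
    thus "real k \<le> real n ^ 2" by (simp add: power2_eq_square)
  qed (use D_nonneg in simp)
  finally show ?thesis .
qed

lemma mu_diff: assumes i: "i < n"
  shows "norm (v t i - cmu (conn t) w n (v t) i) \<le> real n ^ 2 * sqrt (D t)"
proof -
  let ?C = "cls (conn t) n i" and ?P = "cPi (conn t) w n i" and ?B = "real n ^ 2 * sqrt (D t)"
  have P: "?P > 0" by (rule cPi_pos[OF conn_equivn i w_pos])
  have fC: "finite ?C" by (simp add: cls_def)
  have "v t i - cmu (conn t) w n (v t) i = (1 / ?P) *\<^sub>R (?P *\<^sub>R v t i - (\<Sum>j\<in>?C. w j *\<^sub>R v t j))"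
    unfolding cmu_def using P by (simp add: scaleR_diff_right)
  also have "?P *\<^sub>R v t i - (\<Sum>j\<in>?C. w j *\<^sub>R v t j) = (\<Sum>j\<in>?C. w j *\<^sub>R (v t i - v t j))"
    unfolding cPi_def by (simp add: scaleR_sum_left scaleR_diff_right sum_subtractf)
  finally have eq: "v t i - cmu (conn t) w n (v t) i = (1 / ?P) *\<^sub>R (\<Sum>j\<in>?C. w j *\<^sub>R (v t i - v t j))" .
  have "norm (\<Sum>j\<in>?C. w j *\<^sub>R (v t i - v t j)) \<le> (\<Sum>j\<in>?C. norm (w j *\<^sub>R (v t i - v t j)))"
    by (rule norm_sum)
  also have "\<dots> \<le> (\<Sum>j\<in>?C. w j * ?B)"
  proof (rule sum_mono)
    fix j assume j: "j \<in> ?C"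
    hence c: "conn t i j" and jn: "j < n" by (auto simp: cls_def)
    have "norm (v t i - v t j) \<le> ?B" using conn_diff[OF c] by (simp add: norm_minus_commute)
    moreover have "w j > 0" using w_pos jn by simp
    ultimately show "norm (w j *\<^sub>R (v t i - v t j)) \<le> w j * ?B"
      by (simp add: mult_left_mono)
  qed
  also have "\<dots> = ?P * ?B" unfolding cPi_def by (simp add: sum_distrib_right)
  finally have "norm (\<Sum>j\<in>?C. w j *\<^sub>R (v t i - v t j)) \<le> ?P * ?B" .
  hence "(1 / ?P) * norm (\<Sum>j\<in>?C. w j *\<^sub>R (v t i - v t j)) \<le> (1 / ?P) * (?P * ?B)"
    using P by (intro mult_left_mono) auto
  thus ?thesis unfolding eq using P by simp
qed

lemma poincare: "R t \<le> real n ^ 5 / rho * D t"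
proof -
  have "R t \<le> (\<Sum>i<n. (1 / rho) * (real n ^ 4 * D t))"
    unfolding R_def cR_def
  proof (rule sum_mono)
    fix i assume "i \<in> {..<n}" hence i: "i < n" by simp
    have "norm (v t i - cmu (conn t) w n (v t) i)^2 \<le> (real n ^ 2 * sqrt (D t))^2"
      using mu_diff[OF i] by (intro power_mono) auto
    also have "\<dots> = real n ^ 4 * D t" using D_nonneg[of t] by (simp add: power_mult_distrib)
    finally have h: "norm (v t i - cmu (conn t) w n (v t) i)^2 \<le> real n ^ 4 * D t" .
    show "w i * norm (v t i - cmu (conn t) w n (v t) i)^2 \<le> (1 / rho) * (real n ^ 4 * D t)"
      using w_le[OF i] w_pos i h D_nonneg[of t] rho_pos by (intro mult_mono) auto
  qed
  also have "\<dots> = real n * (1 / rho * (real n ^ 4 * D t))" by simp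
  also have "\<dots> = real n ^ 5 / rho * D t"
  proof -
    have "real n ^ 5 = real n * real n ^ 4" by (simp add: numeral_eq_Suc)
    thus ?thesis by simp
  qed
  finally show ?thesis .
qed

lemma vbound: "i < n \<Longrightarrow> norm (v t i) \<le> V0"
proof (induction t arbitrary: i)
  case 0 thus ?case using v0 by simp
next
  case (Suc t)
  let ?d = "real (card (Nb t i))"
  have i: "i < n" by fact
  have "v (Suc t) i = (1 - a i * ?d) *\<^sub>R v t i + a i *\<^sub>R (\<Sum>j\<in>Nb t i. v t j)"
  proof -
    have gg: "g t i = (\<Sum>j\<in>Nb t i. v t j) - ?d *\<^sub>R v t i"
      unfolding g_def sum_subtractf by (simp add: sum_constant_scaleR del: sum_constant)
    show ?thesis unfolding vstep[OF i] gg scaleR_diff_right scaleR_diff_left scaleR_scaleR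
      by simp
  qed
  also have "norm \<dots> \<le> (1 - a i * ?d) * V0 + a i * (?d * V0)"
  proof (rule order.trans[OF norm_triangle_ineq], rule add_mono)
    have "0 \<le> 1 / real n" by simp
    hence c: "0 \<le> 1 - a i * ?d" using ad_le[OF i, of t] by linarith
    show "norm ((1 - a i * ?d) *\<^sub>R v t i) \<le> (1 - a i * ?d) * V0"
      using c Suc.IH[OF i] by (simp add: mult_left_mono)
    have "norm (\<Sum>j\<in>Nb t i. v t j) \<le> (\<Sum>j\<in>Nb t i. norm (v t j))" by (rule norm_sum)
    also have "\<dots> \<le> (\<Sum>j\<in>Nb t i. V0)" using Nb_sub Suc.IH by (intro sum_mono) auto
    also have "\<dots> = ?d * V0" by simp
    finally show "norm (a i *\<^sub>R (\<Sum>j\<in>Nb t i. v t j)) \<le> a i * (?d * V0)"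
      using a_pos[OF i] by (simp add: mult_left_mono)
  qed
  also have "\<dots> = V0" by (simp add: algebra_simps)
  finally show ?case .
qed

lemma x_sum: "i < n \<Longrightarrow> x t i = x 0 i + (\<Sum>s<t. v (Suc s) i)"
  by (induction t) (simp_all add: xstep)

lemma xbound: "i < n \<Longrightarrow> norm (x t i) \<le> 1 + real t * V0"
proof -
  assume i: "i < n"
  have a1: "norm (\<Sum>s<t. v (Suc s) i) \<le> (\<Sum>s<t. norm (v (Suc s) i))" by (rule norm_sum)
  have a2: "(\<Sum>s<t. norm (v (Suc s) i)) \<le> (\<Sum>s<t. V0)" by (rule sum_mono) (rule vbound[OF i])
  have a3: "(\<Sum>s<t. V0) = real t * V0" by simp
  have a4: "norm (x t i) \<le> norm (x 0 i) + norm (\<Sum>s<t. v (Suc s) i)"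
    using x_sum[OF i, of t] norm_triangle_ineq[of "x 0 i" "\<Sum>s<t. v (Suc s) i"] by simp
  show ?thesis using a1 a2 a3 a4 x0[OF i] by linarith
qed


end

lemma geo_tail_eq:
  fixes q :: real assumes q1: "q \<noteq> 1" and s: "s0 \<le> tau"
  shows "(\<Sum>u\<in>{tau..<tau + d}. q ^ (u - s0)) = (q ^ (tau - s0) - q ^ (tau + d - s0)) / (1 - q)"
proof (induction d)
  case 0 thus ?case by simp
next
  case (Suc d)
  have e: "tau + Suc d - s0 = Suc (tau + d - s0)" using s by simp
  have "(\<Sum>u\<in>{tau..<tau + Suc d}. q ^ (u - s0)) = (\<Sum>u\<in>{tau..<tau + d}. q ^ (u - s0)) + q ^ (tau + d - s0)"
    by simp
  also have "\<dots> = (q ^ (tau - s0) - q ^ (tau + d - s0)) / (1 - q) + q ^ (tau + d - s0)" using Suc by simp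
  also have "\<dots> = (q ^ (tau - s0) - q ^ (tau + Suc d - s0)) / (1 - q)"
    unfolding e using q1 by (simp add: field_simps)
  finally show ?case .
qed

lemma geo_tail:
  fixes q :: real assumes q0: "0 \<le> q" and q1: "q < 1" and s: "s0 \<le> tau"
  shows "(\<Sum>u\<in>{tau..<T}. q ^ (u - s0)) \<le> q ^ (tau - s0) / (1 - q)"
proof (cases "tau \<le> T")
  case True
  then obtain d where T: "T = tau + d" using le_Suc_ex by blast
  have "(\<Sum>u\<in>{tau..<T}. q ^ (u - s0)) = (q ^ (tau - s0) - q ^ (tau + d - s0)) / (1 - q)"
    unfolding T using geo_tail_eq[of q s0 tau d] q1 s by simp
  also have "\<dots> \<le> q ^ (tau - s0) / (1 - q)"
    using q0 q1 by (intro divide_right_mono) auto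
  finally show ?thesis .
next
  case False thus ?thesis using q0 q1 by simp
qed

lemma sum_kq_eq:
  fixes q :: real assumes q1: "q \<noteq> 1"
  shows "(\<Sum>k<N. (real k + 1) * q ^ k) = (1 - (real N + 1) * q ^ N + real N * q ^ (N + 1)) / (1 - q)^2"
proof (induction N)
  case 0 thus ?case using q1 by simp
next
  case (Suc N)
  have nz: "(1 - q)^2 \<noteq> 0" using q1 by simp
  have "(\<Sum>k<Suc N. (real k + 1) * q ^ k) = (1 - (real N + 1) * q ^ N + real N * q ^ (N + 1)) / (1 - q)^2 + (real N + 1) * q ^ N"
    using Suc by simp
  also have "\<dots> = (1 - (real (Suc N) + 1) * q ^ Suc N + real (Suc N) * q ^ (Suc N + 1)) / (1 - q)^2"
    using nz by (simp add: field_simps power2_eq_square)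
  finally show ?case .
qed

lemma sum_kq:
  fixes q :: real assumes q0: "0 \<le> q" and q1: "q < 1"
  shows "(\<Sum>k<N. (real k + 1) * q ^ k) \<le> 1 / (1 - q)^2"
proof -
  have "real N * q ^ (N + 1) \<le> (real N + 1) * q ^ N"
  proof -
    have "real N * q ^ (N + 1) = (real N * q) * q ^ N" by simp
    also have "\<dots> \<le> (real N + 1) * q ^ N" using q0 q1
      by (intro mult_right_mono) (auto intro: order.trans[OF mult_left_le[of q "real N"]])
    finally show ?thesis .
  qed
  hence "1 - (real N + 1) * q ^ N + real N * q ^ (N + 1) \<le> 1" by simp
  thus ?thesis unfolding sum_kq_eq[OF less_imp_neq[OF q1]] using q1 by (intro divide_right_mono) auto
qed

lemma double_sum: "(\<Sum>s<t. \<Sum>u\<in>{Suc s..<t}. f u) = (\<Sum>u<t. real u * f u)"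
proof (induction t)
  case 0 thus ?case by simp
next
  case (Suc t)
  have "(\<Sum>s<Suc t. \<Sum>u\<in>{Suc s..<Suc t}. f u) = (\<Sum>s<t. \<Sum>u\<in>{Suc s..<Suc t}. f u)"
    by simp
  also have "\<dots> = (\<Sum>s<t. (\<Sum>u\<in>{Suc s..<t}. f u) + f t)"
    by (rule sum.cong[OF refl]) simp
  also have "\<dots> = (\<Sum>u<t. real u * f u) + real t * f t"
    using Suc by (simp add: sum.distrib)
  finally show ?case by simp
qed

definition "the_e e = 1 - e ^ 14"
definition "qe e = sqrt (the_e e)"
definition "Le e = (SOME L. qe e ^ L \<le> e^2 * (1 - qe e) / 2)"
definition "Fe e s = s + real (Le e) + 1 + 2 * (3 + s + real (Le e)) / e"
fun gs :: "real \<Rightarrow> nat \<Rightarrow> nat" where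
  "gs e 0 = 0" | "gs e (Suc j) = nat \<lceil>Fe e (real (gs e j))\<rceil>"
definition "Ke e = nat \<lceil>1 / (4 * e ^ 4)\<rceil>"
definition "Ts e = gs e (Ke e + 1)"
definition "Zc e = max 1 (1 / (2 * e)) / qe e ^ Ts e / (1 - qe e)^2"

context fixes e :: real assumes e0: "0 < e" and e1: "e < 1"
begin
lemma the_e_bounds: "0 < the_e e" "the_e e < 1"
proof -
  have "e ^ 14 < 1" using e0 e1 by (simp add: power_less_one_iff)
  moreover have "0 < e ^ 14" using e0 by simp
  ultimately show "0 < the_e e" "the_e e < 1" unfolding the_e_def by auto
qed
lemma qe_bounds: "0 < qe e" "qe e < 1"
  unfolding qe_def using the_e_bounds by auto
lemma Le_prop: "qe e ^ Le e \<le> e^2 * (1 - qe e) / 2"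
proof -
  have y: "0 < e^2 * (1 - qe e) / 2" using e0 qe_bounds by simp
  have "(\<lambda>k. qe e ^ k) \<longlonglongrightarrow> 0" using qe_bounds by (intro LIMSEQ_power_zero) simp
  from order_tendstoD(2)[OF this y] obtain k where "qe e ^ k < e^2 * (1 - qe e) / 2"
    unfolding eventually_sequentially by blast
  hence "\<exists>L. qe e ^ L \<le> e^2 * (1 - qe e) / 2" by (blast intro: less_imp_le)
  thus ?thesis unfolding Le_def by (rule someI_ex)
qed
lemma Fe_ge: "0 \<le> s \<Longrightarrow> s + real (Le e) + 1 \<le> Fe e s"
  unfolding Fe_def using e0 by simp
lemma gs_mono: "gs e j \<le> gs e (Suc j)"
proof -
  have "real (gs e j) \<le> Fe e (real (gs e j))" using Fe_ge[of "real (gs e j)"] by simp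
  thus ?thesis by simp linarith
qed
end

locale flk2 = flk +
  assumes nb: "real n * eps^2 \<le> 1" and rb: "eps^2 \<le> rho"
begin

lemma eps_lt1: "eps < 1"
proof -
  have "eps^2 < 1" using rb rho_le_half by simp
  thus ?thesis using eps_pos by (simp add: power_less_one_iff abs_less_iff power2_less_1_iff)
qed

lemma sqrt_n: "sqrt (real n) \<le> 1 / eps"
proof -
  have "real n \<le> 1 / eps^2" using nb eps_pos by (simp add: field_simps)
  hence "sqrt (real n) \<le> sqrt (1 / eps^2)" by simp
  thus ?thesis using eps_pos by (simp add: real_sqrt_divide)
qed

lemma rate: "eps ^ 14 \<le> rho / real n ^ 6"
proof -
  have "(real n * eps^2) ^ 6 \<le> 1" using nb eps_pos by (intro power_le_one) auto
  moreover have "eps ^ 14 * real n ^ 6 = eps^2 * (real n * eps^2) ^ 6"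
  proof -
    have "(eps^2)^6 = eps^12" by (simp flip: power_mult)
    moreover have "eps^14 = eps^2 * eps^12" by (simp flip: power_add)
    ultimately show ?thesis by (simp add: power_mult_distrib)
  qed
  ultimately have "eps ^ 14 * real n ^ 6 \<le> eps^2"
    using mult_left_le[of "(real n * eps^2) ^ 6" "eps^2"] by simp
  hence "eps ^ 14 * real n ^ 6 \<le> rho" using rb by linarith
  thus ?thesis using n1 by (simp add: field_simps)
qed


lemma e_bounds: "0 < eps" "eps < 1" using eps_pos eps_lt1 by auto

lemma R_dec: assumes "nocr t" shows "R (Suc t) \<le> the_e eps * R t"
proof -
  have a: "R (Suc t) \<le> R t - D t / real n" using R_step[OF assms] energy_dec[of t] by linarith
  have np: "0 < real n ^ 5" using n1 by simp
  have "rho / real n ^ 5 * R t \<le> rho / real n ^ 5 * (real n ^ 5 / rho * D t)"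
    using poincare[of t] rho_pos np by (intro mult_left_mono) auto
  also have "\<dots> = D t" using rho_pos np by simp
  finally have b: "rho / real n ^ 5 * R t \<le> D t" .
  have "rho / real n ^ 6 * R t = (rho / real n ^ 5 * R t) / real n"
    by (simp add: numeral_eq_Suc field_simps)
  also have "\<dots> \<le> D t / real n" using b n1 by (intro divide_right_mono) auto
  finally have c: "rho / real n ^ 6 * R t \<le> D t / real n" .
  have d: "eps ^ 14 * R t \<le> rho / real n ^ 6 * R t" using rate R_nonneg[of t] by (intro mult_right_mono) auto
  show ?thesis using a c d unfolding the_e_def by (simp add: algebra_simps)
qed

lemma R_geo: "(\<forall>u. s0 \<le> u \<and> u < s0 + k \<longrightarrow> nocr u) \<Longrightarrow> R (s0 + k) \<le> the_e eps ^ k / 4"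
proof (induction k)
  case 0 thus ?case using R_le by simp
next
  case (Suc k)
  have "R (s0 + Suc k) \<le> the_e eps * R (s0 + k)" using R_dec Suc.prems by simp
  also have "\<dots> \<le> the_e eps * (the_e eps ^ k / 4)"
    using Suc the_e_bounds[OF e_bounds] by (intro mult_left_mono) auto
  finally show ?case by simp
qed

lemma dv_R: "i < n \<Longrightarrow> norm (v (Suc u) i - v u i) \<le> sqrt (real n * R u)"
proof -
  assume i: "i < n"
  have "D u \<le> real n * (E u - E (Suc u))" using energy_dec[of u] n1 by (simp add: field_simps)
  also have "\<dots> \<le> real n * R u" using dE_le_R[of u] by (intro mult_left_mono) auto
  finally show ?thesis using dv_le[OF i, of u] by (intro real_le_rsqrt) linarith
qed

lemma dv_geo: assumes h: "\<forall>w. s0 \<le> w \<and> w < u \<longrightarrow> nocr w" and i: "i < n" and s: "s0 \<le> u"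
  shows "norm (v (Suc u) i - v u i) \<le> qe eps ^ (u - s0) / (2 * eps)"
proof -
  obtain k where u: "u = s0 + k" using s le_Suc_ex by blast
  have Rk: "R u \<le> the_e eps ^ k / 4" using R_geo[of s0 k] h u by auto
  have "norm (v (Suc u) i - v u i) \<le> sqrt (real n * R u)" by (rule dv_R[OF i])
  also have "\<dots> \<le> sqrt (real n * (the_e eps ^ k / 4))" using Rk by (intro real_sqrt_le_mono mult_left_mono) auto
  also have "\<dots> = sqrt (real n) * qe eps ^ k / 2"
    unfolding qe_def by (simp add: real_sqrt_mult real_sqrt_divide real_sqrt_power)
  also have "\<dots> \<le> (1 / eps) * qe eps ^ k / 2"
    using sqrt_n qe_bounds[OF e_bounds] by (intro divide_right_mono mult_right_mono) auto
  finally show ?thesis using u by simp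
qed

lemma vdiff_tail:
  assumes h: "\<forall>w. s0 \<le> w \<and> w < t \<longrightarrow> nocr w" and i: "i < n" and s: "s0 \<le> tau" and tt: "tau \<le> Suc t"
  shows "norm (v (Suc t) i - v tau i) \<le> qe eps ^ (tau - s0) / (2 * eps * (1 - qe eps))"
proof -
  let ?q = "qe eps"
  have q: "0 < ?q" "?q < 1" using qe_bounds[OF e_bounds] by auto
  have "v (Suc t) i - v tau i = (\<Sum>u = tau..<Suc t. v (Suc u) i - v u i)"
    using sum_Suc_diff'[OF tt, of "\<lambda>u. v u i"] by simp
  hence "norm (v (Suc t) i - v tau i) \<le> (\<Sum>u = tau..<Suc t. norm (v (Suc u) i - v u i))"
    using norm_sum[of "\<lambda>u. v (Suc u) i - v u i" "{tau..<Suc t}"] by (simp only:)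
  also have "\<dots> \<le> (\<Sum>u = tau..<Suc t. ?q ^ (u - s0) / (2 * eps))"
  proof (rule sum_mono)
    fix u assume "u \<in> {tau..<Suc t}"
    hence u: "s0 \<le> u" "u \<le> t" using s by auto
    show "norm (v (Suc u) i - v u i) \<le> ?q ^ (u - s0) / (2 * eps)"
      using dv_geo[OF _ i u(1)] h u by auto
  qed
  also have "\<dots> = (\<Sum>u = tau..<Suc t. ?q ^ (u - s0)) / (2 * eps)" by (rule sum_divide_distrib[symmetric])
  also have "\<dots> \<le> (?q ^ (tau - s0) / (1 - ?q)) / (2 * eps)"
    using geo_tail[of ?q s0 tau "Suc t"] q s eps_pos by (intro divide_right_mono) auto
  finally show ?thesis by (simp add: mult_ac)
qed

lemma cr_edge: assumes "\<not> nocr t"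
  obtains i j where "i < n" "j < n" "norm (x (Suc t) i - x (Suc t) j) \<le> r" "eps < norm (v (Suc t) i - v (Suc t) j)"
    "ed (Suc t) i j"
proof -
  obtain i j where e1: "ed (Suc t) i j" and ne: "\<not> ed t i j" using assms unfolding nocr_def by blast
  have ij: "i < n" "j < n" using ed_lt[OF e1] by auto
  have fe: "flock_edge r eps x v (Suc t) i j" using e1 unfolding ed_def by simp
  have nfe: "\<not> flock_edge r eps x v t i j" using ne ij unfolding ed_def by simp
  show ?thesis using that[OF ij, of ] fe nfe e1 by auto
qed

lemma cr_gap: assumes h: "\<forall>u. s0 \<le> u \<and> u < t \<longrightarrow> nocr u" and nc: "\<not> nocr t" and st: "s0 \<le> t"
  shows "real t + 1 < Fe eps (real s0)"
proof -
  let ?q = "qe eps" and ?L = "Le eps"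
  have q: "0 < ?q" "?q < 1" using qe_bounds[OF e_bounds] by auto
  have Lp: "?q ^ ?L \<le> eps^2 * (1 - ?q) / 2" by (rule Le_prop[OF e_bounds])
  obtain i j where ij: "i < n" "j < n" and dx: "norm (x (Suc t) i - x (Suc t) j) \<le> r"
    and dv: "eps < norm (v (Suc t) i - v (Suc t) j)" using cr_edge[OF nc] by blast
  let ?s1 = "s0 + ?L"
  have Fe1: "real s0 + real ?L + 1 \<le> Fe eps (real s0)" by (rule Fe_ge[OF e_bounds]) simp
  show ?thesis
  proof (cases "Suc t \<le> ?s1")
    case True thus ?thesis using Fe1 by simp
  next
    case False
    hence s1t: "?s1 \<le> t" by simp
    let ?w = "\<lambda>tau. v tau i - v tau j"
    have wclose: "norm (?w (Suc tau) - ?w (Suc t)) \<le> eps / 2" if tau: "?s1 \<le> tau" "tau < Suc t" for tau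
    proof -
      have b: "norm (v (Suc t) k - v (Suc tau) k) \<le> ?q ^ (Suc tau - s0) / (2 * eps * (1 - ?q))" if "k < n" for k
        by (rule vdiff_tail[OF h that]) (use tau in auto)
      have qL: "?q ^ (Suc tau - s0) \<le> ?q ^ ?L" using q tau by (intro power_decreasing) auto
      have "?q ^ (Suc tau - s0) / (2 * eps * (1 - ?q)) \<le> (eps^2 * (1 - ?q) / 2) / (2 * eps * (1 - ?q))"
        using order.trans[OF qL Lp] q eps_pos by (intro divide_right_mono) auto
      also have "\<dots> = eps / 4" using q eps_pos by (simp add: field_simps power2_eq_square)
      finally have c: "?q ^ (Suc tau - s0) / (2 * eps * (1 - ?q)) \<le> eps / 4" .
      have "norm (?w (Suc tau) - ?w (Suc t)) \<le> norm (v (Suc t) i - v (Suc tau) i) + norm (v (Suc t) j - v (Suc tau) j)"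
        using norm_triangle_ineq4[of "v (Suc t) i - v (Suc tau) i" "v (Suc t) j - v (Suc tau) j"]
        by (simp add: norm_minus_commute algebra_simps)
      thus ?thesis using b[OF ij(1)] b[OF ij(2)] c by linarith
    qed
    let ?p = "\<lambda>tau. x tau i - x tau j"
    have psum: "?p (Suc t) - ?p ?s1 = (\<Sum>tau = ?s1..<Suc t. ?w (Suc tau))"
    proof -
      have "?p (Suc t) - ?p ?s1 = (\<Sum>tau = ?s1..<Suc t. ?p (Suc tau) - ?p tau)"
        using sum_Suc_diff'[of ?s1 "Suc t" ?p] s1t by simp
      also have "\<dots> = (\<Sum>tau = ?s1..<Suc t. ?w (Suc tau))"
        using xstep ij by (intro sum.cong refl) simp
      finally show ?thesis .
    qed
    let ?N = "real (Suc t - ?s1)"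
    have eqS: "(\<Sum>tau = ?s1..<Suc t. ?w (Suc tau)) = ?N *\<^sub>R ?w (Suc t) + (\<Sum>tau = ?s1..<Suc t. ?w (Suc tau) - ?w (Suc t))"
      by (simp add: sum_subtractf sum_constant_scaleR scaleR_diff_right del: sum_constant)
    have "norm (\<Sum>tau = ?s1..<Suc t. ?w (Suc tau)) \<ge> norm (?N *\<^sub>R ?w (Suc t)) - norm (\<Sum>tau = ?s1..<Suc t. ?w (Suc tau) - ?w (Suc t))"
      unfolding eqS by (rule norm_diff_ineq)
    moreover have "norm (\<Sum>tau = ?s1..<Suc t. ?w (Suc tau) - ?w (Suc t)) \<le> ?N * (eps / 2)"
    proof -
      have "norm (\<Sum>tau = ?s1..<Suc t. ?w (Suc tau) - ?w (Suc t)) \<le> (\<Sum>tau = ?s1..<Suc t. norm (?w (Suc tau) - ?w (Suc t)))"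
        by (rule norm_sum)
      also have "\<dots> \<le> (\<Sum>tau = ?s1..<Suc t. eps / 2)" using wclose by (intro sum_mono) auto
      finally show ?thesis by simp
    qed
    moreover have "norm (?N *\<^sub>R ?w (Suc t)) \<ge> ?N * eps" using dv by (simp add: mult_left_mono)
    ultimately have lo: "norm (?p (Suc t) - ?p ?s1) \<ge> ?N * (eps / 2)" unfolding psum by (simp add: algebra_simps)
    have "norm (?p (Suc t) - ?p ?s1) \<le> norm (?p (Suc t)) + norm (?p ?s1)" by (rule norm_triangle_ineq4)
    also have "norm (?p ?s1) \<le> norm (x ?s1 i) + norm (x ?s1 j)" by (rule norm_triangle_ineq4)
    finally have "norm (?p (Suc t) - ?p ?s1) \<le> r + (1 + real ?s1 * V0) + (1 + real ?s1 * V0)"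
      using dx xbound[OF ij(1), of ?s1] xbound[OF ij(2), of ?s1] by linarith
    also have "\<dots> \<le> 3 + real ?s1"
    proof -
      have "real ?s1 * V0 \<le> real ?s1 * (1/2)" using mult_left_mono[OF V0_le, of "real ?s1"] by simp
      hence h: "2 * (real ?s1 * V0) \<le> real ?s1" by simp
      have "r + (1 + real ?s1 * V0) + (1 + real ?s1 * V0) = r + 2 + 2 * (real ?s1 * V0)" by simp
      thus ?thesis using r_le h by linarith
    qed
    finally have "?N * (eps / 2) \<le> 3 + real ?s1" using lo by linarith
    hence "?N \<le> 2 * (3 + real ?s1) / eps" using eps_pos by (simp add: field_simps)
    moreover have "?N = real (Suc t) - real ?s1" using s1t by simp
    ultimately have f1: "real (Suc t) \<le> real ?s1 + 2 * (3 + real ?s1) / eps" by linarith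
    have X: "2 * (3 + real ?s1) / eps = 2 * (3 + real s0 + real ?L) / eps" by (simp add: add.assoc)
    have Y: "real ?s1 = real s0 + real ?L" by simp
    have Z: "real (Suc t) = real t + 1" by simp
    show ?thesis unfolding Fe_def using f1 X Y Z by linarith
  qed
qed


lemma cr_D: assumes "\<not> nocr u" shows "eps^2 < D (Suc u)"
proof -
  obtain i j where e: "ed (Suc u) i j" and dv: "eps < norm (v (Suc u) i - v (Suc u) j)"
    using cr_edge[OF assms] by blast
  have "norm (v (Suc u) j - v (Suc u) i) \<le> sqrt (D (Suc u))" by (rule edge_diff[OF e])
  hence "eps < sqrt (D (Suc u))" using dv by (simp add: norm_minus_commute)
  hence "eps^2 < (sqrt (D (Suc u)))^2" using eps_pos by (intro power_strict_mono) auto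
  thus ?thesis using D_nonneg by simp
qed

lemma cr_count: assumes fF: "finite F" and cr: "\<forall>u\<in>F. \<not> nocr u"
  shows "real (card F) * eps^4 \<le> 1/4"
proof -
  let ?d = "\<lambda>u. E u - E (Suc u)"
  have dn: "0 \<le> ?d u" for u using E_mono[of u] by simp
  have each: "eps^4 \<le> ?d (Suc u)" if "u \<in> F" for u
  proof -
    have D: "eps^2 < D (Suc u)" using cr_D cr that by blast
    have "eps^2 \<le> 1 / real n" using nb n1 by (simp add: field_simps)
    hence "eps^2 * eps^2 \<le> D (Suc u) * (1 / real n)"
      using D D_nonneg[of "Suc u"] by (intro mult_mono) auto
    also have "\<dots> \<le> ?d (Suc u)" using energy_dec[of "Suc u"] by simp
    finally show ?thesis by (simp add: power_add[symmetric])
  qed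
  obtain M where M: "F \<subseteq> {..<M}" using fF finite_nat_bounded by blast
  have "real (card F) * eps^4 = (\<Sum>u\<in>F. eps^4)" by simp
  also have "\<dots> \<le> (\<Sum>u\<in>F. ?d (Suc u))" using each by (rule sum_mono)
  also have "\<dots> = (\<Sum>u\<in>Suc ` F. ?d u)" by (simp add: sum.reindex)
  also have "\<dots> \<le> (\<Sum>u<Suc M. ?d u)"
    using M dn by (intro sum_mono2) auto
  also have "\<dots> = E 0 - E (Suc M)" by (rule sum_lessThan_telescope')
  also have "\<dots> \<le> 1/4" using E0_le E_nonneg[of "Suc M"] by linarith
  finally show ?thesis .
qed

lemma cr_exists_gap: assumes s: "s0 \<le> u0" and c: "\<not> nocr u0"
  shows "\<exists>u. s0 \<le> u \<and> \<not> nocr u \<and> real u + 1 < Fe eps (real s0)"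
proof -
  have "\<not> nocr (s0 + (u0 - s0))" using s c by simp
  from ex_least_nat_le[of "\<lambda>k. \<not> nocr (s0 + k)", OF this]
  obtain k where k1: "\<forall>i<k. nocr (s0 + i)" and k2: "\<not> nocr (s0 + k)" by blast
  have h: "\<forall>u. s0 \<le> u \<and> u < s0 + k \<longrightarrow> nocr u"
  proof (intro allI impI)
    fix u assume "s0 \<le> u \<and> u < s0 + k"
    hence "u = s0 + (u - s0)" "u - s0 < k" by auto
    thus "nocr u" using k1 by metis
  qed
  have "real (s0 + k) + 1 < Fe eps (real s0)" by (rule cr_gap[OF h k2]) simp
  thus ?thesis using k2 by (intro exI[of _ "s0 + k"]) auto
qed

lemma nat_ceil_gt: "real u < F \<Longrightarrow> u < nat \<lceil>F\<rceil>"
proof -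
  assume "real u < F"
  hence "int u < \<lceil>F\<rceil>" by (simp add: less_ceiling_iff)
  thus ?thesis by simp
qed

lemma cr_card_gs: "\<not> nocr u \<Longrightarrow> gs eps j \<le> u \<Longrightarrow> j \<le> card {w. w < gs eps j \<and> \<not> nocr w}"
proof (induction j arbitrary: u)
  case 0 thus ?case by simp
next
  case (Suc j)
  let ?A = "\<lambda>j. {w. w < gs eps j \<and> \<not> nocr w}"
  have gm: "gs eps j \<le> gs eps (Suc j)" by (rule gs_mono[OF e_bounds])
  have IH: "j \<le> card (?A j)" using Suc.IH[OF Suc.prems(1)] Suc.prems(2) gm by simp
  obtain u' where u': "gs eps j \<le> u'" "\<not> nocr u'" "real u' + 1 < Fe eps (real (gs eps j))"
    using cr_exists_gap[of "gs eps j" u] Suc.prems gm by auto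
  have u'lt: "u' < gs eps (Suc j)" using nat_ceil_gt[of u' "Fe eps (real (gs eps j))"] u'(3) by simp
  have sub: "insert u' (?A j) \<subseteq> ?A (Suc j)" using u' u'lt gm by auto
  have fin: "finite (?A (Suc j))" by (rule finite_subset[of _ "{..<gs eps (Suc j)}"]) auto
  have nin: "u' \<notin> ?A j" using u'(1) by simp
  have "card (insert u' (?A j)) \<le> card (?A (Suc j))" by (rule card_mono[OF fin sub])
  moreover have "card (insert u' (?A j)) = Suc (card (?A j))"
    using nin finite_subset[OF _ fin, of "?A j"] sub by (simp add: card_insert_disjoint)
  ultimately show ?case using IH by simp
qed

lemma no_cr_late: "Ts eps \<le> u \<Longrightarrow> nocr u"
proof (rule ccontr)
  assume u: "Ts eps \<le> u" and c: "\<not> nocr u"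
  let ?A = "{w. w < Ts eps \<and> \<not> nocr w}"
  have "Ke eps + 1 \<le> card ?A" using cr_card_gs[OF c, of "Ke eps + 1"] u unfolding Ts_def by simp
  hence k: "real (Ke eps) + 1 \<le> real (card ?A)" by linarith
  have fin: "finite ?A" by (rule finite_subset[of _ "{..<Ts eps}"]) auto
  have cc: "real (card ?A) * eps^4 \<le> 1/4" by (rule cr_count[OF fin]) auto
  have e4: "0 < eps^4" using eps_pos by simp
  have "1 / (4 * eps^4) \<le> real (Ke eps)" unfolding Ke_def by linarith
  hence "1/4 \<le> real (Ke eps) * eps^4" using e4 by (simp add: field_simps)
  moreover have "(real (Ke eps) + 1) * eps^4 \<le> real (card ?A) * eps^4"
    using k e4 by (intro mult_right_mono) auto
  ultimately show False using cc e4 by (simp add: algebra_simps)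
qed

definition "Cq = max 1 (1 / (2 * eps)) / qe eps ^ Ts eps"

lemma dv_all: assumes i: "i < n" shows "norm (v (Suc u) i - v u i) \<le> Cq * qe eps ^ u"
proof -
  let ?q = "qe eps" and ?T = "Ts eps"
  have q: "0 < ?q" "?q < 1" using qe_bounds[OF e_bounds] by auto
  show ?thesis
  proof (cases "u < ?T")
    case True
    have "norm (v (Suc u) i - v u i) \<le> norm (v (Suc u) i) + norm (v u i)" by (rule norm_triangle_ineq4)
    also have "\<dots> \<le> 1" using vbound[OF i, of "Suc u"] vbound[OF i, of u] V0_le by linarith
    also have "1 \<le> Cq * ?q ^ u"
    proof -
      have "?q ^ ?T \<le> ?q ^ u" using True q by (intro power_decreasing) auto
      hence "1 \<le> ?q ^ u / ?q ^ ?T" using q by simp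
      also have "\<dots> \<le> max 1 (1 / (2 * eps)) * (?q ^ u / ?q ^ ?T)"
        using mult_right_mono[of 1 "max 1 (1 / (2 * eps))" "?q ^ u / ?q ^ ?T"] q by simp
      also have "\<dots> \<le> max 1 (1 / (2 * eps)) * (?q ^ u / ?q ^ ?T) * 1" by simp
      finally show ?thesis unfolding Cq_def by simp
    qed
    finally show ?thesis .
  next
    case False
    have h: "\<forall>w. ?T \<le> w \<and> w < u \<longrightarrow> nocr w" using no_cr_late by auto
    have "norm (v (Suc u) i - v u i) \<le> ?q ^ (u - ?T) / (2 * eps)" using dv_geo[OF h i] False by simp
    also have "?q ^ (u - ?T) = ?q ^ u / ?q ^ ?T" using False q by (simp add: power_diff)
    also have "\<dots> / (2 * eps) = (1 / (2 * eps)) * (?q ^ u / ?q ^ ?T)" by simp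
    also have "\<dots> \<le> max 1 (1 / (2 * eps)) * (?q ^ u / ?q ^ ?T)" using q by (intro mult_right_mono) auto
    finally show ?thesis unfolding Cq_def by simp
  qed
qed

lemma final_bound: assumes i: "i < n" and t: "0 < t"
  shows "norm (v t i - (1 / real t) *\<^sub>R (x t i - x 0 i)) \<le> Zc eps / real t"
proof -
  let ?q = "qe eps" and ?dl = "\<lambda>u. norm (v (Suc u) i - v u i)"
  have q: "0 < ?q" "?q < 1" using qe_bounds[OF e_bounds] by auto
  have Cq0: "0 \<le> Cq" unfolding Cq_def using q by simp
  have tp: "0 < real t" using t by simp
  have "x t i - x 0 i = (\<Sum>s<t. v (Suc s) i)" using x_sum[OF i, of t] by simp
  hence "v t i - (1 / real t) *\<^sub>R (x t i - x 0 i) = (1 / real t) *\<^sub>R (\<Sum>s<t. v t i - v (Suc s) i)"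
    using tp by (simp add: sum_subtractf scaleR_diff_right sum_constant_scaleR del: sum_constant)
  hence "norm (v t i - (1 / real t) *\<^sub>R (x t i - x 0 i)) = (1 / real t) * norm (\<Sum>s<t. v t i - v (Suc s) i)"
    using tp by simp
  also have "\<dots> \<le> (1 / real t) * (\<Sum>s<t. \<Sum>u\<in>{Suc s..<t}. ?dl u)"
  proof (rule mult_left_mono)
    have "norm (\<Sum>s<t. v t i - v (Suc s) i) \<le> (\<Sum>s<t. norm (v t i - v (Suc s) i))" by (rule norm_sum)
    also have "\<dots> \<le> (\<Sum>s<t. \<Sum>u\<in>{Suc s..<t}. ?dl u)"
    proof (rule sum_mono)
      fix s assume "s \<in> {..<t}" hence st: "Suc s \<le> t" by simp
      have "v t i - v (Suc s) i = (\<Sum>u = Suc s..<t. v (Suc u) i - v u i)"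
        using sum_Suc_diff'[OF st, of "\<lambda>u. v u i"] by simp
      thus "norm (v t i - v (Suc s) i) \<le> (\<Sum>u\<in>{Suc s..<t}. ?dl u)"
        using norm_sum[of "\<lambda>u. v (Suc u) i - v u i" "{Suc s..<t}"] by (simp only:)
    qed
    finally show "norm (\<Sum>s<t. v t i - v (Suc s) i) \<le> (\<Sum>s<t. \<Sum>u\<in>{Suc s..<t}. ?dl u)" .
  qed simp
  also have "(\<Sum>s<t. \<Sum>u\<in>{Suc s..<t}. ?dl u) = (\<Sum>u<t. real u * ?dl u)" by (rule double_sum)
  also have "\<dots> \<le> (\<Sum>u<t. Cq * ((real u + 1) * ?q ^ u))"
  proof (rule sum_mono)
    fix u assume "u \<in> {..<t}"
    have "real u * ?dl u \<le> (real u + 1) * (Cq * ?q ^ u)"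
      using dv_all[OF i, of u] Cq0 q by (intro mult_mono) auto
    thus "real u * ?dl u \<le> Cq * ((real u + 1) * ?q ^ u)" by (simp add: algebra_simps)
  qed
  also have "\<dots> = Cq * (\<Sum>u<t. (real u + 1) * ?q ^ u)" by (simp add: sum_distrib_left)
  also have "\<dots> \<le> Cq * (1 / (1 - ?q)^2)" using sum_kq[of ?q t] q Cq0 by (intro mult_left_mono) auto
  also have "\<dots> = Zc eps" unfolding Cq_def Zc_def by simp
  finally show ?thesis using tp by (simp add: divide_simps mult_left_mono)
qed


end

context flk
begin

lemma first_diff: "ed s p q \<Longrightarrow> \<exists>s' i j. i < n \<and> j < n \<and> eps < norm (v s' i - v s' j)"
proof (induction s arbitrary: p q)
  case 0 thus ?case unfolding ed_def by auto
next
  case (Suc s)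
  hence pq: "p < n" "q < n" and fe: "flock_edge r eps x v (Suc s) p q" unfolding ed_def by auto
  show ?case
  proof (cases "flock_edge r eps x v s p q")
    case True thus ?thesis using Suc.IH[of p q] pq unfolding ed_def by auto
  next
    case False thus ?thesis using fe pq by auto
  qed
qed

lemma nontriv: assumes "ed s p q" shows "real n * eps^2 \<le> 1" "eps^2 \<le> rho"
proof -
  obtain s' i j where ij: "i < n" "j < n" and d: "eps < norm (v s' i - v s' j)"
    using first_diff[OF assms] by blast
  have "norm (v s' i - v s' j) \<le> norm (v s' i) + norm (v s' j)" by (rule norm_triangle_ineq4)
  also have "\<dots> \<le> 2 * V0" using vbound[OF ij(1), of s'] vbound[OF ij(2), of s'] by linarith
  also have "\<dots> = sqrt (rho / real n)" unfolding V0_def by simp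
  finally have "eps < sqrt (rho / real n)" using d by linarith
  hence "eps^2 < (sqrt (rho / real n))^2" using eps_pos by (intro power_strict_mono) auto
  also have "\<dots> = rho / real n" using rho_pos by simp
  finally have e2: "eps^2 < rho / real n" .
  hence "real n * eps^2 < rho" using n1 by (simp add: field_simps)
  thus "real n * eps^2 \<le> 1" using rho_le_half by linarith
  have "rho / real n \<le> rho" using rho_pos n1 by (simp add: divide_le_eq)
  thus "eps^2 \<le> rho" using e2 by linarith
qed

lemma triv_v: assumes "\<forall>s p q. \<not> ed s p q" and i: "i < n" shows "v s i = v 0 i"
proof (induction s)
  case (Suc s)
  have "Nb s i = {}" using Nb_iff[OF i] assms by blast
  hence "g s i = 0" unfolding g_def by simp
  thus ?case using vstep[OF i, of s] Suc by simp
qed simp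

end

theorem lemma1:
  "\<exists>eps0>0. \<forall>eps. 0 < eps \<and> eps < eps0 \<longrightarrow>
    (\<exists>c::real. \<forall>(n::nat) (m::nat) r a x v.
       n \<ge> 1 \<longrightarrow> flocking_system n r eps a x v \<longrightarrow>
       (\<forall>t. card (flocks n r eps x v t) \<le> m) \<longrightarrow>
       (\<forall>i<n. \<forall>t::nat. t > 1 \<longrightarrow>
          norm (v t i - (1 / real t) *\<^sub>R (x t i - x 0 i))
            \<le> c * real n ^ (2 * (m + 2)) * (1 / Min (a ` {..<n})) ^ (m + 1)
                * ln (real t) / real t))"
proof (rule exI[of _ "1::real"], intro conjI allI impI)
  show "(0::real) < 1" by simp
  fix eps :: real assume e: "0 < eps \<and> eps < 1"
  have e0: "0 < eps" and e1: "eps < 1" using e by auto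
  have q: "0 < qe eps" "qe eps < 1" using qe_bounds[OF e0 e1] by auto
  have Z0: "0 \<le> Zc eps" unfolding Zc_def using q by simp
  have l2: "0 < ln (2::real)" by simp
  show "\<exists>c::real. \<forall>(n::nat) (m::nat) r a x v.
       n \<ge> 1 \<longrightarrow> flocking_system n r eps a x v \<longrightarrow>
       (\<forall>t. card (flocks n r eps x v t) \<le> m) \<longrightarrow>
       (\<forall>i<n. \<forall>t::nat. t > 1 \<longrightarrow>
          norm (v t i - (1 / real t) *\<^sub>R (x t i - x 0 i))
            \<le> c * real n ^ (2 * (m + 2)) * (1 / Min (a ` {..<n})) ^ (m + 1)
                * ln (real t) / real t)"
  proof (intro exI[of _ "Zc eps / ln 2"] allI impI)
    fix n m :: nat and r :: real and a :: "nat \<Rightarrow> real" and x v :: "nat \<Rightarrow> nat \<Rightarrow> real^3" and i t :: nat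
    assume n1: "1 \<le> n" and sys: "flocking_system n r eps a x v"
      and "\<forall>t. card (flocks n r eps x v t) \<le> m" and i: "i < n" and t: "1 < t"
    interpret flk n r eps a x v by unfold_locales (use n1 sys in auto)
    have tp: "0 < real t" using t by simp
    have lt: "ln 2 \<le> ln (real t)" using t by simp
    let ?P = "real n ^ (2 * (m + 2)) * (1 / Min (a ` {..<n})) ^ (m + 1)"
    have P1: "1 \<le> ?P"
    proof -
      have "1 \<le> real n ^ (2 * (m + 2))" using n1 by (intro one_le_power) simp
      moreover have "1 \<le> (1 / Min (a ` {..<n})) ^ (m + 1)"
      proof (intro one_le_power)
        show "1 \<le> 1 / Min (a ` {..<n})" using rho_pos rho_le_half unfolding rho_def by (simp add: field_simps)
      qed
      ultimately show ?thesis using mult_mono[of 1 "real n ^ (2 * (m + 2))" 1] by fastforce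
    qed
    have rhs: "Zc eps / real t \<le> Zc eps / ln 2 * ?P * ln (real t) / real t"
    proof -
      have "Zc eps = Zc eps / ln 2 * 1 * ln 2" using l2 by simp
      also have "\<dots> \<le> Zc eps / ln 2 * ?P * ln (real t)"
      proof -
        have zl: "0 \<le> Zc eps / ln 2" using Z0 l2 by simp
        have cP: "0 \<le> Zc eps / ln 2 * ?P"
          by (rule mult_nonneg_nonneg[OF zl]) (rule order.trans[OF zero_le_one P1])
        show ?thesis using mult_mono[OF mult_left_mono[OF P1 zl] lt cP] l2 by simp
      qed
      finally show ?thesis using tp by (intro divide_right_mono) auto
    qed
    have main: "norm (v t i - (1 / real t) *\<^sub>R (x t i - x 0 i))
            \<le> Zc eps / ln 2 * ?P * ln (real t) / real t"
    proof (cases "\<exists>s p q. ed s p q")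
      case True
      then obtain s p q where "ed s p q" by blast
      note nt = nontriv[OF this]
      interpret flk2 n r eps a x v by unfold_locales (use nt in auto)
      have "norm (v t i - (1 / real t) *\<^sub>R (x t i - x 0 i)) \<le> Zc eps / real t"
        using final_bound[OF i] t by simp
      thus ?thesis using rhs by linarith
    next
      case False
      hence vc: "v s i = v 0 i" for s using triv_v[OF _ i] by blast
      have "x t i - x 0 i = (\<Sum>s<t. v (Suc s) i)" using x_sum[OF i, of t] by simp
      also have "\<dots> = (\<Sum>s<t. v 0 i)" by (rule sum.cong[OF refl]) (rule vc)
      also have "\<dots> = real t *\<^sub>R v 0 i" by (simp add: sum_constant_scaleR del: sum_constant)
      finally have "norm (v t i - (1 / real t) *\<^sub>R (x t i - x 0 i)) = 0" using vc[of t] tp by simp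
      moreover have "0 \<le> Zc eps / ln 2 * ?P * ln (real t) / real t"
      proof -
        have "0 \<le> Zc eps / real t" using Z0 tp by simp
        thus ?thesis using rhs by linarith
      qed
      ultimately show ?thesis by linarith
    qed
    show "norm (v t i - (1 / real t) *\<^sub>R (x t i - x 0 i))
            \<le> Zc eps / ln 2 * real n ^ (2 * (m + 2)) * (1 / Min (a ` {..<n})) ^ (m + 1)
                * ln (real t) / real t"
      using main by (simp only: mult.assoc)
  qed
qed

end
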